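(* Let $n\in\mathbb{N}$, $p\in(0,1)$, let $G\in\mathcal{G}(n,p)$, and let $\ell_1,\dots,\ell_n$ be the eigenvalues of its Laplacian, with $\ell_1=0$ the zero eigenvalue. Then for all $i\in\{2,\dots,n\}$, \begin{align*} \mathbb{E}[\ell_i] &= np,\\ \mathbb{E}[\ell_i^2] &= n(n-2)p^2+2np,\\ \mathbb{E}[\ell_i^3] &= n(n-2)(n-4)p^3+6n(n-2)p^2+4np,\\ \mathbb{E}[\ell_i^4] &= n(n-7)(n-3)(n-2)p^4+6n(2n-7)(n-2)p^3+25n(n-2)p^2+8np. \end{align*}
   Context: $\mathcal{G}(n,p)$ denotes the Erdős–Rényi model: a simple undirected graph on nodes $[n]$ in which each of the $\binom{n}{2}$ possible edges is present independently with probability $p$. The Laplacian is $L=D-A$, with $A$ the adjacency matrix and $D=\mathrm{diag}(d_1,\dots,d_n)$, $d_i$ the degree of node $i$. The eigenvalues of $L$ are treated as an unordered collection of random variables $\ell_1,\dots,\ell_n$, with the convention that $\ell_1=0$ is the zero eigenvalue that every Laplacian has. *)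

theory Defs
  imports "HOL-Probability.Probability" "HOL-Combinatorics.Multiset_Permutations"
          "Jordan_Normal_Form.Char_Poly"
begin

definition pot_edges :: "nat \<Rightarrow> (nat \<times> nat) set" where
  "pot_edges n = {(i, j). i < j \<and> j < n}"

definition gnp :: "nat \<Rightarrow> real \<Rightarrow> (nat \<times> nat \<Rightarrow> bool) pmf" where
  "gnp n p = Pi_pmf (pot_edges n) False (\<lambda>_. bernoulli_pmf p)"

definition adj :: "(nat \<times> nat \<Rightarrow> bool) \<Rightarrow> nat \<Rightarrow> nat \<Rightarrow> bool" where
  "adj E i j = (if i < j then E (i, j) else if j < i then E (j, i) else False)"

definition degree :: "nat \<Rightarrow> (nat \<times> nat \<Rightarrow> bool) \<Rightarrow> nat \<Rightarrow> nat" where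
  "degree n E i = card {j. j < n \<and> adj E i j}"

definition laplacian :: "nat \<Rightarrow> (nat \<times> nat \<Rightarrow> bool) \<Rightarrow> real mat" where
  "laplacian n E = mat n n (\<lambda>(i, j).
      (if i = j then real (degree n E i) else 0) - (if adj E i j then 1 else 0))"

text \<open>Multiset of the eigenvalues of the Laplacian (with multiplicity): the roots of the
  characteristic polynomial (which splits over the reals, the matrix being symmetric).\<close>
definition lap_spectrum :: "nat \<Rightarrow> (nat \<times> nat \<Rightarrow> bool) \<Rightarrow> real multiset" where
  "lap_spectrum n E = proots (char_poly (laplacian n E))"

text \<open>The eigenvalues as an unordered collection: l_1 = 0 is the zero eigenvalue
  (one copy of 0 removed), and l_2,...,l_n are the remaining eigenvalues in uniformly
  random order.  The result is the joint law of (G, [l_2,...,l_n]); l_i = xs ! (i - 2).\<close>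
definition lap_eigs_labelled :: "nat \<Rightarrow> real \<Rightarrow> real list pmf" where
  "lap_eigs_labelled n p =
     do { E \<leftarrow> gnp n p;
          pmf_of_set (permutations_of_multiset (lap_spectrum n E - {#0#})) }"

definition moment :: "nat \<Rightarrow> real \<Rightarrow> nat \<Rightarrow> nat \<Rightarrow> real" where
  "moment n p i k = measure_pmf.expectation (lap_eigs_labelled n p) (\<lambda>xs. (xs ! (i - 2)) ^ k)"

end

theory Submission
  imports Defs "Jordan_Normal_Form.Schur_Decomposition"
begin

lemma perm_sum_swap:
  fixes f :: "'a \<Rightarrow> real"
  assumes j: "j < size M"
  shows "(\<Sum>xs\<in>permutations_of_multiset M. f (xs ! j)) = (\<Sum>xs\<in>permutations_of_multiset M. f (xs ! 0))"
proof -
  let ?S = "permutations_of_multiset M"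
  define sw where "sw xs = xs[0 := xs ! j, j := xs ! 0]" for xs :: "'a list"
  have len: "length xs = size M" if "xs \<in> ?S" for xs
    using that by (metis permutations_of_multisetD size_mset)
  have swS: "sw xs \<in> ?S" if "xs \<in> ?S" for xs
  proof -
    have "mset (sw xs) = mset xs"
      using len[OF that] j unfolding sw_def
      by (intro mset_swap) auto
    then show ?thesis using that by (metis permutations_of_multisetD permutations_of_multisetI)
  qed
  have swsw: "sw (sw xs) = xs" if "xs \<in> ?S" for xs
    using len[OF that] j unfolding sw_def
    by (intro nth_equalityI) (simp_all add: nth_list_update)
  have sw0: "sw xs ! 0 = xs ! j" if "xs \<in> ?S" for xs
    using len[OF that] j unfolding sw_def by (simp add: nth_list_update)
  show ?thesis
    by (rule sum.reindex_bij_witness[of _ sw sw]) (simp_all add: swS swsw sw0)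
qed

lemma perm_expectation:
  fixes f :: "real \<Rightarrow> real" and M :: "real multiset"
  assumes j: "j < size M"
  shows "measure_pmf.expectation (pmf_of_set (permutations_of_multiset M)) (\<lambda>xs. f (xs ! j))
         = (\<Sum>x\<in>#M. f x) / real (size M)"
proof -
  let ?S = "permutations_of_multiset M"
  have fin: "finite ?S" and ne: "?S \<noteq> {}" by auto
  have E: "measure_pmf.expectation (pmf_of_set ?S) (\<lambda>xs. f (xs ! j)) = (\<Sum>xs\<in>?S. f (xs ! j)) / card ?S"
    by (rule integral_pmf_of_set[OF ne fin])
  have "real (size M) * (\<Sum>xs\<in>?S. f (xs ! 0)) = (\<Sum>k<size M. \<Sum>xs\<in>?S. f (xs ! k))"
  proof -
    have "(\<Sum>k<size M. \<Sum>xs\<in>?S. f (xs ! k)) = (\<Sum>k<size M. \<Sum>xs\<in>?S. f (xs ! 0))"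
      by (rule sum.cong[OF refl], rule perm_sum_swap) simp
    then show ?thesis by simp
  qed
  also have "\<dots> = (\<Sum>xs\<in>?S. \<Sum>k<size M. f (xs ! k))" by (rule sum.swap)
  also have "\<dots> = (\<Sum>xs\<in>?S. (\<Sum>x\<in>#M. f x))"
  proof (rule sum.cong[OF refl])
    fix xs assume "xs \<in> ?S"
    then have m: "mset xs = M" by (rule permutations_of_multisetD)
    then have "size M = length xs" by auto
    then have "(\<Sum>k<size M. f (xs ! k)) = sum_list (map f xs)"
      by (simp add: sum_list_sum_nth lessThan_atLeast0)
    also have "\<dots> = (\<Sum>x\<in>#mset xs. f x)" by (metis mset_map sum_mset_sum_list)
    finally show "(\<Sum>k<size M. f (xs ! k)) = (\<Sum>x\<in>#M. f x)" using m by simp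
  qed
  also have "\<dots> = real (card ?S) * (\<Sum>x\<in>#M. f x)" by simp
  finally have key: "real (size M) * (\<Sum>xs\<in>?S. f (xs ! 0)) = real (card ?S) * (\<Sum>x\<in>#M. f x)" .
  have cpos: "card ?S > 0" using fin ne by (simp add: card_gt_0_iff)
  have mpos: "size M > 0" using j by simp
  have "(\<Sum>xs\<in>?S. f (xs ! 0)) / real (card ?S) = (\<Sum>x\<in>#M. f x) / real (size M)"
    using cpos mpos key by (subst frac_eq_eq) (auto simp: mult.commute)
  then show ?thesis unfolding E perm_sum_swap[OF j] .
qed

definition tr :: "'a::comm_ring_1 mat \<Rightarrow> 'a" where
  "tr A = (\<Sum>i<dim_row A. A $$ (i,i))"

lemma mult_entry:
  assumes "X \<in> carrier_mat n m" "Y \<in> carrier_mat m k" "i < n" "j < k"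
  shows "(X * Y) $$ (i,j) = (\<Sum>l<m. X $$ (i,l) * Y $$ (l,j))"
  using assms by (simp add: scalar_prod_def lessThan_atLeast0)

lemma tr_mult_comm:
  fixes X Y :: "'a::comm_ring_1 mat"
  assumes X: "X \<in> carrier_mat n m" and Y: "Y \<in> carrier_mat m n"
  shows "tr (X * Y) = tr (Y * X)"
proof -
  have "tr (X * Y) = (\<Sum>i<n. (X * Y) $$ (i,i))" unfolding tr_def using X by simp
  also have "\<dots> = (\<Sum>i<n. \<Sum>l<m. X $$ (i,l) * Y $$ (l,i))"
    by (rule sum.cong[OF refl], rule mult_entry[OF X Y]) auto
  also have "\<dots> = (\<Sum>l<m. \<Sum>i<n. Y $$ (l,i) * X $$ (i,l))"
    by (subst sum.swap) (simp add: mult.commute)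
  also have "\<dots> = (\<Sum>l<m. (Y * X) $$ (l,l))"
    by (rule sum.cong[OF refl], rule mult_entry[OF Y X, symmetric]) auto
  also have "\<dots> = tr (Y * X)"
    unfolding tr_def using Y by simp
  finally show ?thesis .
qed

lemma ut_mult:
  fixes X Y :: "'a::comm_ring_1 mat"
  assumes X: "X \<in> carrier_mat n n" and Y: "Y \<in> carrier_mat n n"
    and uX: "upper_triangular X" and uY: "upper_triangular Y"
  shows "upper_triangular (X * Y)" "\<And>i. i < n \<Longrightarrow> (X * Y) $$ (i,i) = X $$ (i,i) * Y $$ (i,i)"
proof -
  show "upper_triangular (X * Y)"
  proof (rule upper_triangularI)
    fix i j assume ji: "j < i" and i: "i < dim_row (X * Y)"
    then have i': "i < n" using X by simp
    have "(X * Y) $$ (i,j) = (\<Sum>l<n. X $$ (i,l) * Y $$ (l,j))"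
      using mult_entry[OF X Y i'] ji i' by simp
    also have "\<dots> = 0"
    proof (rule sum.neutral, intro ballI)
      fix l assume l: "l \<in> {..<n}"
      show "X $$ (i,l) * Y $$ (l,j) = 0"
      proof (cases "l < i")
        case True then show ?thesis using upper_triangularD[OF uX True] X i' by simp
      next
        case False then have "j < l" using ji by simp
        then show ?thesis using upper_triangularD[OF uY \<open>j < l\<close>] Y l by simp
      qed
    qed
    finally show "(X * Y) $$ (i,j) = 0" .
  qed
  fix i assume i: "i < n"
  have "(X * Y) $$ (i,i) = (\<Sum>l<n. X $$ (i,l) * Y $$ (l,i))"
    using mult_entry[OF X Y i i] .
  also have "\<dots> = X $$ (i,i) * Y $$ (i,i) + (\<Sum>l\<in>{..<n}-{i}. X $$ (i,l) * Y $$ (l,i))"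
    by (rule sum.remove) (use i in auto)
  also have "(\<Sum>l\<in>{..<n}-{i}. X $$ (i,l) * Y $$ (l,i)) = 0"
  proof (rule sum.neutral, intro ballI)
    fix l assume l: "l \<in> {..<n}-{i}"
    show "X $$ (i,l) * Y $$ (l,i) = 0"
    proof (cases "l < i")
      case True then show ?thesis using upper_triangularD[OF uX True] X i by simp
    next
      case False then have "i < l" using l by simp
      then show ?thesis using upper_triangularD[OF uY \<open>i < l\<close>] Y l by simp
    qed
  qed
  finally show "(X * Y) $$ (i,i) = X $$ (i,i) * Y $$ (i,i)" by simp
qed

lemma ut_pow:
  fixes B :: "'a::comm_ring_1 mat"
  assumes B: "B \<in> carrier_mat n n" and uB: "upper_triangular B"
  shows "upper_triangular (B ^\<^sub>m k) \<and> (\<forall>i<n. (B ^\<^sub>m k) $$ (i,i) = B $$ (i,i) ^ k)"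
proof (induction k)
  case 0 then show ?case using B by auto
next
  case (Suc k)
  have Bk: "B ^\<^sub>m k \<in> carrier_mat n n" using B by simp
  show ?case using ut_mult[OF Bk B _ uB] Suc by (simp add: mult.commute)
qed

lemma real_ev:
  fixes A :: "real mat"
  assumes A: "A \<in> carrier_mat n n" and symA: "\<And>i j. i < n \<Longrightarrow> j < n \<Longrightarrow> A $$ (i,j) = A $$ (j,i)"
    and ev: "eigenvalue (map_mat complex_of_real A) a"
  shows "Im a = 0"
proof -
  let ?Ac = "map_mat complex_of_real A"
  from ev obtain v where v: "eigenvector ?Ac v a" unfolding eigenvalue_def by blast
  then have vc: "v \<in> carrier_vec n" and v0: "v \<noteq> 0\<^sub>v n" and Av: "?Ac *\<^sub>v v = a \<cdot>\<^sub>v v"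
    using A unfolding eigenvector_def by auto
  have ent: "(\<Sum>j<n. complex_of_real (A $$ (i,j)) * v $ j) = a * v $ i" if i: "i < n" for i
  proof -
    have "(?Ac *\<^sub>v v) $ i = (\<Sum>j<n. complex_of_real (A $$ (i,j)) * v $ j)"
      using A vc i by (simp add: scalar_prod_def lessThan_atLeast0)
    moreover have "(a \<cdot>\<^sub>v v) $ i = a * v $ i" using vc i by simp
    ultimately show ?thesis using Av by simp
  qed
  define s where "s = (\<Sum>i<n. cnj (v $ i) * (\<Sum>j<n. complex_of_real (A $$ (i,j)) * v $ j))"
  define N where "N = (\<Sum>i<n. cnj (v $ i) * v $ i)"
  have "s = (\<Sum>i<n. cnj (v $ i) * (a * v $ i))"
    unfolding s_def by (rule sum.cong[OF refl]) (simp add: ent)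
  also have "\<dots> = a * N" unfolding N_def by (simp add: sum_distrib_left mult_ac)
  finally have sN: "s = a * N" .
  have "cnj s = (\<Sum>i<n. \<Sum>j<n. v $ i * complex_of_real (A $$ (i,j)) * cnj (v $ j))"
    unfolding s_def cnj_sum
  proof (rule sum.cong[OF refl])
    fix i assume "i \<in> {..<n}"
    have "cnj (cnj (v $ i) * (\<Sum>j<n. complex_of_real (A $$ (i,j)) * v $ j))
        = v $ i * (\<Sum>j<n. complex_of_real (A $$ (i,j)) * cnj (v $ j))"
      by (simp add: cnj_sum)
    also have "\<dots> = (\<Sum>j<n. v $ i * complex_of_real (A $$ (i,j)) * cnj (v $ j))"
      by (simp add: sum_distrib_left mult.assoc)
    finally show "cnj (cnj (v $ i) * (\<Sum>j<n. complex_of_real (A $$ (i,j)) * v $ j))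
        = (\<Sum>j<n. v $ i * complex_of_real (A $$ (i,j)) * cnj (v $ j))" .
  qed
  also have "\<dots> = (\<Sum>j<n. \<Sum>i<n. v $ i * complex_of_real (A $$ (i,j)) * cnj (v $ j))"
    by (rule sum.swap)
  also have "\<dots> = s"
    unfolding s_def sum_distrib_left
  proof (intro sum.cong refl)
    fix j i assume j: "j \<in> {..<n}" and i: "i \<in> {..<n}"
    show "v $ i * complex_of_real (A $$ (i, j)) * cnj (v $ j) = cnj (v $ j) * (complex_of_real (A $$ (j, i)) * v $ i)"
      using symA[of i j] i j by simp
  qed
  finally have "cnj s = s" .
  then have "Im (cnj s) = Im s" by simp
  then have ims: "Im s = 0" by simp
  have Nre: "N = complex_of_real (\<Sum>i<n. (Re (v $ i))^2 + (Im (v $ i))^2)"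
    unfolding N_def of_real_sum
    by (rule sum.cong[OF refl]) (simp add: complex_eq_iff power2_eq_square)
  obtain i where i: "i < n" "v $ i \<noteq> 0"
  proof -
    have "\<exists>i<n. v $ i \<noteq> 0"
    proof (rule ccontr)
      assume "\<not> (\<exists>i<n. v $ i \<noteq> 0)"
      then have "v = 0\<^sub>v n" using vc by (intro eq_vecI) auto
      then show False using v0 by simp
    qed
    then show ?thesis using that by blast
  qed
  have pos: "(\<Sum>i<n. (Re (v $ i))^2 + (Im (v $ i))^2) > 0"
  proof -
    have "(Re (v $ i))^2 + (Im (v $ i))^2 > 0" using i(2)
      by (auto simp: sum_power2_gt_zero_iff complex_eq_iff)
    moreover have "(Re (v $ i))^2 + (Im (v $ i))^2 \<le> (\<Sum>i<n. (Re (v $ i))^2 + (Im (v $ i))^2)"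
      by (rule member_le_sum) (use i in auto)
    ultimately show ?thesis by linarith
  qed
  have "Im s = Im a * (\<Sum>i<n. (Re (v $ i))^2 + (Im (v $ i))^2)"
    unfolding sN Nre by simp
  then show ?thesis using ims pos by simp
qed

lemma sym_spec:
  fixes A :: "real mat"
  assumes A: "A \<in> carrier_mat n n" and symA: "\<And>i j. i < n \<Longrightarrow> j < n \<Longrightarrow> A $$ (i,j) = A $$ (j,i)"
  shows "\<exists>es. char_poly A = (\<Prod>e\<leftarrow>es. [:-e,1:]) \<and> length es = n \<and> (\<forall>k. (\<Sum>e\<leftarrow>es. e^k) = tr (A ^\<^sub>m k))"
proof -
  let ?Ac = "map_mat complex_of_real A"
  have Ac: "?Ac \<in> carrier_mat n n" using A by simp
  obtain as where as: "char_poly ?Ac = (\<Prod>a\<leftarrow>as. [:- a, 1:])" "length as = n"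
    using char_poly_factorized[OF Ac] by blast
  have cpAc: "char_poly ?Ac = map_poly complex_of_real (char_poly A)"
    by (rule of_real_hom.char_poly_hom[OF A])
  have real: "Im a = 0" if a: "a \<in> set as" for a
  proof -
    have "poly (char_poly ?Ac) a = 0" unfolding as(1) using a
      by (simp add: poly_prod_list prod_list_zero_iff)
    then have "eigenvalue ?Ac a" using eigenvalue_root_char_poly[OF Ac] by simp
    then show ?thesis using real_ev[OF A] symA by blast
  qed
  define es where "es = map Re as"
  interpret mp: map_poly_inj_comm_ring_hom "complex_of_real" by unfold_locales
  have "map_poly complex_of_real (\<Prod>e\<leftarrow>es. [:-e,1:]) = (\<Prod>e\<leftarrow>es. map_poly complex_of_real [:-e,1:])"
    by (simp add: mp.hom_prod_list o_def)
  also have "\<dots> = (\<Prod>a\<leftarrow>as. [:- a, 1:])"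
    unfolding es_def map_map o_def using real
    by (intro arg_cong[where f=prod_list] map_cong refl) (simp add: complex_eq_iff)
  finally have "map_poly complex_of_real (\<Prod>e\<leftarrow>es. [:-e,1:]) = map_poly complex_of_real (char_poly A)"
    using as cpAc by simp
  then have "(\<Prod>e\<leftarrow>es. [:-e,1:]) = char_poly A"
    by (rule mp.injectivity)
  then have cp: "char_poly A = (\<Prod>e\<leftarrow>es. [:-e,1:])" by simp
  obtain B P Q where sd: "schur_decomposition A es = (B,P,Q)" by (cases "schur_decomposition A es") auto
  from schur_decomposition[OF A cp sd]
  have wit: "similar_mat_wit A B P Q" and uB: "upper_triangular B" and dB: "diag_mat B = es" by auto
  from wit A have carr: "B \<in> carrier_mat n n" "P \<in> carrier_mat n n" "Q \<in> carrier_mat n n" "Q * P = 1\<^sub>m n"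
    unfolding similar_mat_wit_def Let_def by auto
  have len: "length es = n" using as(2) es_def by simp
  have "(\<Sum>e\<leftarrow>es. e^k) = tr (A ^\<^sub>m k)" for k
  proof -
    have Apow: "A ^\<^sub>m k = P * B ^\<^sub>m k * Q" by (rule similar_mat_wit_pow_id[OF wit])
    have Bk: "B ^\<^sub>m k \<in> carrier_mat n n" using carr by simp
    have "tr (A ^\<^sub>m k) = tr (P * (B ^\<^sub>m k * Q))"
      using Apow carr Bk by (simp add: assoc_mult_mat[of P n n "B ^\<^sub>m k" n Q n])
    also have "\<dots> = tr ((B ^\<^sub>m k * Q) * P)"
      by (rule tr_mult_comm[OF carr(2) mult_carrier_mat[OF Bk carr(3)]])
    also have "(B ^\<^sub>m k * Q) * P = B ^\<^sub>m k"
      using Bk carr by (simp add: assoc_mult_mat[of "B ^\<^sub>m k" n n Q n P n])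
    also have "tr (B ^\<^sub>m k) = (\<Sum>i<n. B $$ (i,i) ^ k)"
      unfolding tr_def using ut_pow[OF carr(1) uB, of k] carr by simp
    also have "\<dots> = (\<Sum>e\<leftarrow>es. e^k)"
    proof -
      have "es = map (\<lambda>i. B $$ (i,i)) [0..<n]" using dB carr unfolding diag_mat_def by auto
      then show ?thesis by (simp add: sum_list_map_eq_sum_count lessThan_atLeast0 sum.list_conv_set_nth
              o_def distinct_sum_list_conv_Sum)
    qed
    finally show ?thesis by simp
  qed
  then show ?thesis using cp len by blast
qed

lemma finite_pot_edges: "finite (pot_edges n)"
proof -
  have "pot_edges n \<subseteq> {..<n} \<times> {..<n}" unfolding pot_edges_def by auto
  then show ?thesis by (rule finite_subset) auto
qed

lemma finite_set_Pi_pmf: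
  assumes "finite I"
  shows "finite (set_pmf (Pi_pmf I dflt (P :: 'a \<Rightarrow> bool pmf)))"
proof -
  have "set_pmf (Pi_pmf I dflt P) \<subseteq> PiE_dflt I dflt (\<lambda>_. UNIV)"
    using set_Pi_pmf_subset[OF assms, of dflt P] unfolding PiE_dflt_def by auto
  moreover have "finite (PiE_dflt I dflt (\<lambda>_. (UNIV :: bool set)))"
    by (rule finite_PiE_dflt) (use assms in auto)
  ultimately show ?thesis by (rule finite_subset)
qed

lemma integrable_Pi_bool:
  assumes "finite I"
  shows "integrable (measure_pmf (Pi_pmf I dflt (P :: 'a \<Rightarrow> bool pmf))) (f :: _ \<Rightarrow> real)"
  by (rule integrable_measure_pmf_finite[OF finite_set_Pi_pmf[OF assms]])

lemma Pi_decomp: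
  fixes h :: "('a \<Rightarrow> bool) \<Rightarrow> real"
  assumes fin: "finite I" and e: "e \<in> I"
  shows "measure_pmf.expectation (Pi_pmf I False (\<lambda>_. bernoulli_pmf p)) h =
    (\<Sum>y\<in>UNIV. pmf (bernoulli_pmf p) y *
        measure_pmf.expectation (Pi_pmf (I - {e}) False (\<lambda>_. bernoulli_pmf p)) (\<lambda>g. h (g(e := y))))"
proof -
  have I: "I = insert e (I - {e})" using e by auto
  have fin': "finite (I - {e})" using fin by simp
  have "Pi_pmf I False (\<lambda>_. bernoulli_pmf p) =
      do {y \<leftarrow> bernoulli_pmf p; map_pmf (\<lambda>g. g(e := y)) (Pi_pmf (I - {e}) False (\<lambda>_. bernoulli_pmf p))}"
    by (subst I, subst Pi_pmf_insert'[OF fin']) (auto simp: map_pmf_def)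
  also have "measure_pmf.expectation \<dots> h =
      (\<Sum>y\<in>UNIV. pmf (bernoulli_pmf p) y *\<^sub>R
         measure_pmf.expectation (map_pmf (\<lambda>g. g(e := y)) (Pi_pmf (I - {e}) False (\<lambda>_. bernoulli_pmf p))) h)"
    by (rule pmf_expectation_bind) (auto intro: finite_set_Pi_pmf[OF fin'])
  finally show ?thesis by (simp add: fun_upd_def)
qed

lemma peel:
  fixes f :: "('a \<Rightarrow> bool) \<Rightarrow> real"
  assumes fin: "finite I" and e: "e \<in> I" and p: "0 \<le> p" "p \<le> 1"
    and indep: "\<And>g b. f (g(e := b)) = f g"
  shows "measure_pmf.expectation (Pi_pmf I False (\<lambda>_. bernoulli_pmf p)) (\<lambda>g. (if g e then 1 else 0) * f g)
       = p * measure_pmf.expectation (Pi_pmf I False (\<lambda>_. bernoulli_pmf p)) f"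
proof -
  let ?Q = "Pi_pmf (I - {e}) False (\<lambda>_. bernoulli_pmf p)"
  have UNIV_bool': "(UNIV :: bool set) = {True, False}" by auto
  have "measure_pmf.expectation (Pi_pmf I False (\<lambda>_. bernoulli_pmf p)) (\<lambda>g. (if g e then 1 else 0) * f g)
      = p * measure_pmf.expectation ?Q f"
    using p by (subst Pi_decomp[OF fin e]) (simp add: UNIV_bool' indep)
  moreover have "measure_pmf.expectation (Pi_pmf I False (\<lambda>_. bernoulli_pmf p)) f
      = measure_pmf.expectation ?Q f"
    using p by (subst Pi_decomp[OF fin e]) (simp add: UNIV_bool' indep algebra_simps)
  ultimately show ?thesis by simp
qed

definition ind :: "(nat \<times> nat \<Rightarrow> bool) \<Rightarrow> nat \<times> nat \<Rightarrow> real" where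
  "ind E e = (if E e then 1 else 0)"

definition Eg :: "nat \<Rightarrow> real \<Rightarrow> ((nat \<times> nat \<Rightarrow> bool) \<Rightarrow> real) \<Rightarrow> real" where
  "Eg n p f = measure_pmf.expectation (gnp n p) f"

lemma integ_gnp: "integrable (measure_pmf (gnp n p)) (f :: _ \<Rightarrow> real)"
  unfolding gnp_def by (rule integrable_Pi_bool[OF finite_pot_edges])

lemma Eg_add: "Eg n p (\<lambda>E. f E + g E) = Eg n p f + Eg n p g"
  unfolding Eg_def by (rule Bochner_Integration.integral_add[OF integ_gnp integ_gnp])

lemma Eg_diff: "Eg n p (\<lambda>E. f E - g E) = Eg n p f - Eg n p g"
  unfolding Eg_def by (rule Bochner_Integration.integral_diff[OF integ_gnp integ_gnp])

lemma Eg_cmult: "Eg n p (\<lambda>E. c * f E) = c * Eg n p f"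
  unfolding Eg_def by (rule Bochner_Integration.integral_mult_right_zero)

lemma Eg_const: "Eg n p (\<lambda>E. c) = c"
  unfolding Eg_def by simp

lemma Eg_sum: "Eg n p (\<lambda>E. \<Sum>i\<in>A. f i E) = (\<Sum>i\<in>A. Eg n p (f i))"
  unfolding Eg_def by (rule Bochner_Integration.integral_sum) (rule integ_gnp)

lemma Eg_cong: "(\<And>E. f E = g E) \<Longrightarrow> Eg n p f = Eg n p g"
  by (rule arg_cong[where f="Eg n p"]) auto

lemma Eg_peel:
  assumes e: "e \<in> pot_edges n" and p: "0 \<le> p" "p \<le> 1"
    and indep: "\<And>E b. f (E(e := b)) = f E"
  shows "Eg n p (\<lambda>E. ind E e * f E) = p * Eg n p f"
  unfolding Eg_def gnp_def ind_def
  by (rule peel[OF finite_pot_edges e p indep])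

definition S :: "(nat \<times> nat) set \<Rightarrow> (nat \<times> nat \<Rightarrow> bool) \<Rightarrow> real" where
  "S F E = (\<Sum>e\<in>F. ind E e)"

definition mo1 :: "real \<Rightarrow> real \<Rightarrow> real" where "mo1 N p = N * p"
definition mo2 :: "real \<Rightarrow> real \<Rightarrow> real" where "mo2 N p = N * p + N * (N - 1) * p^2"
definition mo3 :: "real \<Rightarrow> real \<Rightarrow> real" where
  "mo3 N p = N * p + 3 * N * (N - 1) * p^2 + N * (N - 1) * (N - 2) * p^3"
definition mo4 :: "real \<Rightarrow> real \<Rightarrow> real" where
  "mo4 N p = N * p + 7 * N * (N - 1) * p^2 + 6 * N * (N - 1) * (N - 2) * p^3
     + N * (N - 1) * (N - 2) * (N - 3) * p^4"

lemma S_upd: "e \<notin> F \<Longrightarrow> S F (E(e := b)) = S F E"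
  unfolding S_def ind_def by (intro sum.cong refl) auto

lemma ind_01: "ind E e = 0 \<or> ind E e = 1"
  unfolding ind_def by auto

lemma mom_S:
  assumes F: "F \<subseteq> pot_edges n" and p: "0 \<le> p" "p \<le> 1"
  shows "Eg n p (S F) = mo1 (card F) p \<and> Eg n p (\<lambda>E. (S F E)^2) = mo2 (card F) p \<and>
         Eg n p (\<lambda>E. (S F E)^3) = mo3 (card F) p \<and> Eg n p (\<lambda>E. (S F E)^4) = mo4 (card F) p"
proof -
  have fin: "finite F" using F finite_pot_edges by (rule finite_subset)
  from fin F show ?thesis
  proof (induction F rule: finite_induct)
    case empty
    then show ?case by (simp add: S_def Eg_const mo1_def mo2_def mo3_def mo4_def)
  next
    case (insert e F)
    have e: "e \<in> pot_edges n" and FF: "F \<subseteq> pot_edges n" using insert.prems by auto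
    note IH = insert.IH[OF FF]
    define N where "N = real (card F)"
    have cardI: "real (card (insert e F)) = N + 1" using insert.hyps N_def by simp
    have Sins: "S (insert e F) E = ind E e + S F E" for E
      unfolding S_def using insert.hyps by simp
    have ind: "\<And>E. ind E e * ind E e = ind E e" using ind_01 by (metis mult_1 mult_zero_left)
    have pk: "\<And>g. Eg n p (\<lambda>E. ind E e * g (S F E)) = p * Eg n p (\<lambda>E. g (S F E))"
      by (rule Eg_peel[OF e p]) (simp add: S_upd insert.hyps)
    have e1: "Eg n p (S (insert e F)) = Eg n p (S F) + p"
    proof -
      have "Eg n p (S (insert e F)) = Eg n p (\<lambda>E. ind E e * 1 + S F E)"
        by (rule Eg_cong) (simp add: Sins)
      also have "\<dots> = p + Eg n p (S F)"
        using pk[of "\<lambda>_. 1"] by (simp add: Eg_add Eg_const)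
      finally show ?thesis by simp
    qed
    have e2: "Eg n p (\<lambda>E. (S (insert e F) E)^2) = Eg n p (\<lambda>E. (S F E)^2) + p * (2 * Eg n p (S F) + 1)"
    proof -
      have "Eg n p (\<lambda>E. (S (insert e F) E)^2) = Eg n p (\<lambda>E. (S F E)^2 + ind E e * (2 * S F E + 1))"
        by (rule Eg_cong) (simp add: Sins power2_eq_square algebra_simps ind)
      also have "\<dots> = Eg n p (\<lambda>E. (S F E)^2) + p * (2 * Eg n p (S F) + 1)"
        using pk[of "\<lambda>s. 2 * s + 1"] by (simp add: Eg_add Eg_const Eg_cmult)
      finally show ?thesis .
    qed
    have e3: "Eg n p (\<lambda>E. (S (insert e F) E)^3) = Eg n p (\<lambda>E. (S F E)^3)
        + p * (3 * Eg n p (\<lambda>E. (S F E)^2) + 3 * Eg n p (S F) + 1)"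
    proof -
      have "Eg n p (\<lambda>E. (S (insert e F) E)^3) = Eg n p (\<lambda>E. (S F E)^3 + ind E e * (3 * (S F E)^2 + 3 * S F E + 1))"
      proof (rule Eg_cong)
        fix E
        show "(S (insert e F) E)^3 = (S F E)^3 + ind E e * (3 * (S F E)^2 + 3 * S F E + 1)"
          using ind_01[of E e] unfolding Sins by (auto simp: algebra_simps power2_eq_square power3_eq_cube)
      qed
      also have "\<dots> = Eg n p (\<lambda>E. (S F E)^3) + p * (3 * Eg n p (\<lambda>E. (S F E)^2) + 3 * Eg n p (S F) + 1)"
        using pk[of "\<lambda>s. 3 * s^2 + 3 * s + 1"] by (simp add: Eg_add Eg_const Eg_cmult)
      finally show ?thesis .
    qed
    have e4: "Eg n p (\<lambda>E. (S (insert e F) E)^4) = Eg n p (\<lambda>E. (S F E)^4)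
        + p * (4 * Eg n p (\<lambda>E. (S F E)^3) + 6 * Eg n p (\<lambda>E. (S F E)^2) + 4 * Eg n p (S F) + 1)"
    proof -
      have "Eg n p (\<lambda>E. (S (insert e F) E)^4) = Eg n p (\<lambda>E. (S F E)^4 + ind E e * (4 * (S F E)^3 + 6 * (S F E)^2 + 4 * S F E + 1))"
      proof (rule Eg_cong)
        fix E
        show "(S (insert e F) E)^4 = (S F E)^4 + ind E e * (4 * (S F E)^3 + 6 * (S F E)^2 + 4 * S F E + 1)"
          using ind_01[of E e] unfolding Sins by (auto simp: algebra_simps eval_nat_numeral)
      qed
      also have "\<dots> = Eg n p (\<lambda>E. (S F E)^4) + p * (4 * Eg n p (\<lambda>E. (S F E)^3) + 6 * Eg n p (\<lambda>E. (S F E)^2) + 4 * Eg n p (S F) + 1)"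
        using pk[of "\<lambda>s. 4 * s^3 + 6 * s^2 + 4 * s + 1"] by (simp add: Eg_add Eg_const Eg_cmult)
      finally show ?thesis .
    qed
    from IH have h1: "Eg n p (S F) = mo1 N p" and h2: "Eg n p (\<lambda>E. (S F E)^2) = mo2 N p"
      and h3: "Eg n p (\<lambda>E. (S F E)^3) = mo3 N p" and h4: "Eg n p (\<lambda>E. (S F E)^4) = mo4 N p"
      unfolding N_def by auto
    show ?case
      unfolding cardI e1 e2 e3 e4 h1 h2 h3 h4
      by (simp add: mo1_def mo2_def mo3_def mo4_def algebra_simps eval_nat_numeral)
  qed
qed

definition xv :: "(nat \<times> nat \<Rightarrow> bool) \<Rightarrow> nat \<Rightarrow> nat \<Rightarrow> real" where
  "xv E a b = (if adj E a b then 1 else 0)"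

definition ed :: "nat \<Rightarrow> nat \<Rightarrow> nat \<times> nat" where
  "ed a b = (min a b, max a b)"

lemma xv_ed: "xv E a b = (if a = b then 0 else ind E (ed a b))"
  unfolding xv_def adj_def ed_def ind_def by (auto simp: min_def max_def)

lemma xv_sym: "xv E a b = xv E b a"
  unfolding xv_def adj_def by auto

lemma xv_diag[simp]: "xv E a a = 0"
  unfolding xv_def adj_def by auto

lemma xv_01: "xv E a b = 0 \<or> xv E a b = 1"
  unfolding xv_def by auto

lemma xv_sq: "xv E a b * xv E a b = xv E a b"
  using xv_01[of E a b] by auto

lemma ed_pot: "a \<noteq> b \<Longrightarrow> a < n \<Longrightarrow> b < n \<Longrightarrow> ed a b \<in> pot_edges n"
  unfolding ed_def pot_edges_def by (auto simp: min_def max_def)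

lemma ed_eq_iff: "a \<noteq> b \<Longrightarrow> ed a b = ed c d \<longleftrightarrow> (a = c \<and> b = d) \<or> (a = d \<and> b = c)"
  unfolding ed_def by (auto simp: min_def max_def split: if_splits)

lemma xv_upd: "e \<noteq> ed a b \<Longrightarrow> xv (E(e := t)) a b = xv E a b"
  unfolding xv_ed ind_def by auto

definition Uf :: "nat set \<Rightarrow> nat \<Rightarrow> (nat \<times> nat \<Rightarrow> bool) \<Rightarrow> real" where
  "Uf K a E = (\<Sum>c\<in>K. xv E a c)"

definition Cf :: "nat set \<Rightarrow> nat \<Rightarrow> nat \<Rightarrow> (nat \<times> nat \<Rightarrow> bool) \<Rightarrow> real" where
  "Cf K a b E = (\<Sum>c\<in>K. xv E a c * xv E b c)"

lemma Uf_upd: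
  assumes "\<And>c. c \<in> K \<Longrightarrow> e \<noteq> ed a c"
  shows "Uf K a (E(e := t)) = Uf K a E"
  unfolding Uf_def using assms by (intro sum.cong refl) (simp add: xv_upd)

lemma Cf_upd:
  assumes "\<And>c. c \<in> K \<Longrightarrow> e \<noteq> ed a c" "\<And>c. c \<in> K \<Longrightarrow> e \<noteq> ed b c"
  shows "Cf K a b (E(e := t)) = Cf K a b E"
  unfolding Cf_def using assms by (intro sum.cong refl) (simp add: xv_upd)

lemma Cf_sym: "Cf K a b E = Cf K b a E"
  unfolding Cf_def by (simp add: mult.commute)

lemma peel_xv:
  assumes ab: "a \<noteq> b" "a < n" "b < n" and p: "0 \<le> p" "p \<le> 1"
    and indep: "\<And>E t. g (E(ed a b := t)) = g E"
  shows "Eg n p (\<lambda>E. xv E a b * g E) = p * Eg n p g"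
proof -
  have "Eg n p (\<lambda>E. xv E a b * g E) = Eg n p (\<lambda>E. ind E (ed a b) * g E)"
    by (rule Eg_cong) (simp add: xv_ed ab)
  also have "\<dots> = p * Eg n p g"
    by (rule Eg_peel[OF ed_pot[OF ab] p indep])
  finally show ?thesis .
qed

lemma pair_mom:
  fixes p :: real
  assumes ab: "a \<noteq> b" "a < n" "b < n" and p: "0 \<le> p" "p \<le> 1"
    and K: "K \<subseteq> {..<n} - {a, b}"
  shows "Eg n p (Uf K a) = real (card K) * p \<and> Eg n p (Cf K a b) = real (card K) * p^2 \<and>
    Eg n p (\<lambda>E. (Cf K a b E)^2) = real (card K) * p^2 + real (card K) * (real (card K) - 1) * p^4 \<and>
    Eg n p (\<lambda>E. Cf K a b E * Uf K a E) = real (card K) * p^2 + real (card K) * (real (card K) - 1) * p^3"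
proof -
  have fin: "finite K" using K by (rule finite_subset) auto
  from fin K show ?thesis
  proof (induction K rule: finite_induct)
    case empty
    then show ?case by (simp add: Uf_def Cf_def Eg_const)
  next
    case (insert c K)
    have c: "c < n" "c \<noteq> a" "c \<noteq> b" and KK: "K \<subseteq> {..<n} - {a, b}" using insert.prems by auto
    note IH = insert.IH[OF KK]
    define k where "k = real (card K)"
    have cardI: "real (card (insert c K)) = k + 1" using insert.hyps k_def by simp
    have ne1: "ed a c \<noteq> ed a c'" "ed a c \<noteq> ed b c'" "ed b c \<noteq> ed a c'" "ed b c \<noteq> ed b c'" if "c' \<in> K" for c'
      using that insert.hyps c ab KK by (auto simp: ed_eq_iff)
    have nab: "ed a c \<noteq> ed b c" using c ab by (auto simp: ed_eq_iff)
    have indU: "Uf K a (E(e := t)) = Uf K a E" if "e = ed a c \<or> e = ed b c" for E e t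
    proof (rule Uf_upd)
      fix c' assume "c' \<in> K" then show "e \<noteq> ed a c'" using that ne1[OF \<open>c' \<in> K\<close>] by auto
    qed
    have indC: "Cf K a b (E(e := t)) = Cf K a b E" if "e = ed a c \<or> e = ed b c" for E e t
    proof (rule Cf_upd)
      fix c' assume "c' \<in> K" then show "e \<noteq> ed a c'" using that ne1[OF \<open>c' \<in> K\<close>] by auto
    next
      fix c' assume "c' \<in> K" then show "e \<noteq> ed b c'" using that ne1[OF \<open>c' \<in> K\<close>] by auto
    qed
    have pk1: "Eg n p (\<lambda>E. xv E a c * h (Uf K a E) (Cf K a b E)) = p * Eg n p (\<lambda>E. h (Uf K a E) (Cf K a b E))" for h
      by (rule peel_xv) (use ab c p indU indC in auto)
    have pk2: "Eg n p (\<lambda>E. xv E a c * xv E b c * h (Uf K a E) (Cf K a b E)) = p^2 * Eg n p (\<lambda>E. h (Uf K a E) (Cf K a b E))" for h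
    proof -
      have "Eg n p (\<lambda>E. xv E a c * xv E b c * h (Uf K a E) (Cf K a b E))
          = Eg n p (\<lambda>E. xv E a c * (xv E b c * h (Uf K a E) (Cf K a b E)))"
        by (simp add: mult.assoc)
      also have "\<dots> = p * Eg n p (\<lambda>E. xv E b c * h (Uf K a E) (Cf K a b E))"
        by (rule peel_xv) (use ab c p indU indC nab in \<open>auto simp: xv_upd\<close>)
      also have "Eg n p (\<lambda>E. xv E b c * h (Uf K a E) (Cf K a b E)) = p * Eg n p (\<lambda>E. h (Uf K a E) (Cf K a b E))"
        by (rule peel_xv) (use ab c p indU indC in auto)
      finally show ?thesis by (simp add: power2_eq_square)
    qed
    have Uins: "Uf (insert c K) a E = xv E a c + Uf K a E" for E
      unfolding Uf_def using insert.hyps by simp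
    have Cins: "Cf (insert c K) a b E = xv E a c * xv E b c + Cf K a b E" for E
      unfolding Cf_def using insert.hyps by simp
    have sq: "(xv E a c * xv E b c) * (xv E a c * xv E b c) = xv E a c * xv E b c" for E
      using xv_01[of E a c] xv_01[of E b c] by auto
    from IH have h1: "Eg n p (Uf K a) = k * p" and h2: "Eg n p (Cf K a b) = k * p^2"
      and h3: "Eg n p (\<lambda>E. (Cf K a b E)^2) = k * p^2 + k * (k - 1) * p^4"
      and h4: "Eg n p (\<lambda>E. Cf K a b E * Uf K a E) = k * p^2 + k * (k - 1) * p^3"
      unfolding k_def by auto
    have e1: "Eg n p (Uf (insert c K) a) = Eg n p (Uf K a) + p"
    proof -
      have "Eg n p (Uf (insert c K) a) = Eg n p (\<lambda>E. xv E a c * 1 + Uf K a E)"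
        by (rule Eg_cong) (simp add: Uins)
      also have "\<dots> = p + Eg n p (Uf K a)"
        using pk1[of "\<lambda>_ _. 1"] by (simp add: Eg_add Eg_const)
      finally show ?thesis by simp
    qed
    have e2: "Eg n p (Cf (insert c K) a b) = Eg n p (Cf K a b) + p^2"
    proof -
      have "Eg n p (Cf (insert c K) a b) = Eg n p (\<lambda>E. xv E a c * xv E b c * 1 + Cf K a b E)"
        by (rule Eg_cong) (simp add: Cins)
      also have "\<dots> = p^2 + Eg n p (Cf K a b)"
        using pk2[of "\<lambda>_ _. 1"] by (simp add: Eg_add Eg_const)
      finally show ?thesis by simp
    qed
    have e3: "Eg n p (\<lambda>E. (Cf (insert c K) a b E)^2) = Eg n p (\<lambda>E. (Cf K a b E)^2) + p^2 * (2 * Eg n p (Cf K a b) + 1)"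
    proof -
      have "Eg n p (\<lambda>E. (Cf (insert c K) a b E)^2)
          = Eg n p (\<lambda>E. (Cf K a b E)^2 + xv E a c * xv E b c * (2 * Cf K a b E + 1))"
      proof (rule Eg_cong)
        fix E
        show "(Cf (insert c K) a b E)^2 = (Cf K a b E)^2 + xv E a c * xv E b c * (2 * Cf K a b E + 1)"
          unfolding Cins power2_eq_square using sq[of E] by (simp add: algebra_simps)
      qed
      also have "\<dots> = Eg n p (\<lambda>E. (Cf K a b E)^2) + p^2 * (2 * Eg n p (Cf K a b) + 1)"
        using pk2[of "\<lambda>u s. 2 * s + 1"] by (simp add: Eg_add Eg_const Eg_cmult)
      finally show ?thesis .
    qed
    have e4: "Eg n p (\<lambda>E. Cf (insert c K) a b E * Uf (insert c K) a E)
        = Eg n p (\<lambda>E. Cf K a b E * Uf K a E) + p * Eg n p (Cf K a b) + p^2 * (Eg n p (Uf K a) + 1)"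
    proof -
      have "Eg n p (\<lambda>E. Cf (insert c K) a b E * Uf (insert c K) a E)
          = Eg n p (\<lambda>E. Cf K a b E * Uf K a E + (xv E a c * Cf K a b E + xv E a c * xv E b c * (Uf K a E + 1)))"
      proof (rule Eg_cong)
        fix E
        have "xv E a c * xv E b c * xv E a c = xv E a c * xv E b c"
          using xv_sq[of E a c] by (metis mult.assoc mult.commute)
        then show "Cf (insert c K) a b E * Uf (insert c K) a E
            = Cf K a b E * Uf K a E + (xv E a c * Cf K a b E + xv E a c * xv E b c * (Uf K a E + 1))"
          unfolding Cins Uins by (simp add: algebra_simps)
      qed
      also have "\<dots> = Eg n p (\<lambda>E. Cf K a b E * Uf K a E) + p * Eg n p (Cf K a b) + p^2 * (Eg n p (Uf K a) + 1)"
        using pk1[of "\<lambda>u s. s"] pk2[of "\<lambda>u s. u + 1"] by (simp add: Eg_add Eg_const Eg_cmult)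
      finally show ?thesis .
    qed
    show ?case
      unfolding cardI e1 e2 e3 e4 h1 h2 h3 h4
      by (simp add: algebra_simps eval_nat_numeral)
  qed
qed

definition dg :: "nat \<Rightarrow> (nat \<times> nat \<Rightarrow> bool) \<Rightarrow> nat \<Rightarrow> real" where
  "dg n E a = (\<Sum>c<n. xv E a c)"

definition lpe :: "nat \<Rightarrow> (nat \<times> nat \<Rightarrow> bool) \<Rightarrow> nat \<Rightarrow> nat \<Rightarrow> real" where
  "lpe n E a b = (if a = b then dg n E a else 0) - xv E a b"

definition Qm :: "nat \<Rightarrow> (nat \<times> nat \<Rightarrow> bool) \<Rightarrow> nat \<Rightarrow> nat \<Rightarrow> real" where
  "Qm n E a b = (\<Sum>c<n. lpe n E a c * lpe n E c b)"

lemma degree_dg: "real (degree n E a) = dg n E a"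
proof -
  have "dg n E a = (\<Sum>c\<in>{c\<in>{..<n}. adj E a c}. 1)"
    unfolding dg_def xv_def by (rule sum.inter_filter[symmetric]) simp
  also have "\<dots> = real (card {c\<in>{..<n}. adj E a c})" by simp
  also have "{c\<in>{..<n}. adj E a c} = {j. j < n \<and> adj E a j}" by auto
  finally show ?thesis unfolding degree_def by simp
qed

lemma ed_eq_iff2: "c \<noteq> d \<Longrightarrow> ed a b = ed c d \<longleftrightarrow> (a = c \<and> b = d) \<or> (a = d \<and> b = c)"
  unfolding ed_def by (auto simp: min_def max_def split: if_splits)

lemma lpe_sym: "lpe n E a b = lpe n E b a"
  unfolding lpe_def by (simp add: xv_sym)

lemma dg_S:
  assumes a: "a < n"
  shows "dg n E a = S (ed a ` ({..<n} - {a})) E"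
proof -
  have inj: "inj_on (ed a) ({..<n} - {a})"
    by (rule inj_onI) (auto simp: ed_eq_iff)
  have "dg n E a = (\<Sum>c\<in>{..<n} - {a}. xv E a c)"
    unfolding dg_def using a by (subst sum.remove[of _ a]) auto
  also have "\<dots> = (\<Sum>c\<in>{..<n} - {a}. ind E (ed a c))"
    by (intro sum.cong refl) (auto simp: xv_ed)
  also have "\<dots> = S (ed a ` ({..<n} - {a})) E"
    unfolding S_def by (simp add: sum.reindex[OF inj])
  finally show ?thesis .
qed

lemma dg_F:
  assumes a: "a < n"
  shows "ed a ` ({..<n} - {a}) \<subseteq> pot_edges n" "card (ed a ` ({..<n} - {a})) = n - 1"
proof -
  have inj: "inj_on (ed a) ({..<n} - {a})"
    by (rule inj_onI) (auto simp: ed_eq_iff)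
  show "ed a ` ({..<n} - {a}) \<subseteq> pot_edges n" using a by (auto intro: ed_pot)
  show "card (ed a ` ({..<n} - {a})) = n - 1"
    using a by (simp add: card_image[OF inj])
qed

lemma vertex_mom:
  fixes p :: real
  assumes a: "a < n" and p: "0 \<le> p" "p \<le> 1"
  shows "Eg n p (\<lambda>E. dg n E a) = mo1 (real n - 1) p \<and> Eg n p (\<lambda>E. (dg n E a)^2) = mo2 (real n - 1) p \<and>
         Eg n p (\<lambda>E. (dg n E a)^3) = mo3 (real n - 1) p \<and> Eg n p (\<lambda>E. (dg n E a)^4) = mo4 (real n - 1) p"
proof -
  have c: "real (card (ed a ` ({..<n} - {a}))) = real n - 1" using dg_F(2)[OF a] a by simp
  show ?thesis
    using mom_S[OF dg_F(1)[OF a] p] unfolding c dg_S[OF a, symmetric] by simp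
qed

lemma Qm_diag:
  assumes a: "a < n"
  shows "Qm n E a a = (dg n E a)^2 + dg n E a"
proof -
  have "Qm n E a a = lpe n E a a * lpe n E a a + (\<Sum>c\<in>{..<n} - {a}. lpe n E a c * lpe n E c a)"
    unfolding Qm_def using a by (subst sum.remove[of _ a]) auto
  also have "(\<Sum>c\<in>{..<n} - {a}. lpe n E a c * lpe n E c a) = (\<Sum>c\<in>{..<n} - {a}. xv E a c)"
    by (intro sum.cong refl) (auto simp: lpe_def xv_sym[of E c a for c] xv_sq)
  also have "\<dots> = dg n E a"
    unfolding dg_def using a by (subst (2) sum.remove[of _ a]) auto
  finally show ?thesis by (simp add: lpe_def power2_eq_square)
qed

lemma Qm_off:
  assumes ab: "a \<noteq> b" "a < n" "b < n"
  shows "Qm n E a b = Cf ({..<n} - {a, b}) a b E - xv E a b * (dg n E a + dg n E b)"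
proof -
  let ?K = "{..<n} - {a, b}"
  have split: "{..<n} = insert a (insert b ?K)" using ab by auto
  have "Qm n E a b = lpe n E a a * lpe n E a b + (lpe n E a b * lpe n E b b + (\<Sum>c\<in>?K. lpe n E a c * lpe n E c b))"
    unfolding Qm_def by (subst split, subst sum.insert, simp, use ab in simp, subst sum.insert) (use ab in auto)
  also have "(\<Sum>c\<in>?K. lpe n E a c * lpe n E c b) = Cf ?K a b E"
    unfolding Cf_def by (intro sum.cong refl) (auto simp: lpe_def xv_sym[of E _ b])
  finally show ?thesis using ab by (simp add: lpe_def algebra_simps)
qed

lemma dg_split:
  assumes ab: "a \<noteq> b" "a < n" "b < n"
  shows "dg n E a = xv E a b + Uf ({..<n} - {a, b}) a E"
proof -
  let ?K = "{..<n} - {a, b}"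
  have split: "{..<n} = insert a (insert b ?K)" using ab by auto
  show ?thesis unfolding dg_def Uf_def
    by (subst split, subst sum.insert, simp, use ab in simp, subst sum.insert) (use ab in auto)
qed

lemma W_S:
  assumes ab: "a \<noteq> b" "a < n" "b < n"
  defines "K \<equiv> {..<n} - {a, b}"
  shows "Uf K a E + Uf K b E = S (ed a ` K \<union> ed b ` K) E"
    "ed a ` K \<union> ed b ` K \<subseteq> pot_edges n" "card (ed a ` K \<union> ed b ` K) = 2 * (n - 2)"
proof -
  have inja: "inj_on (ed a) K" unfolding K_def by (rule inj_onI) (auto simp: ed_eq_iff)
  have injb: "inj_on (ed b) K" unfolding K_def by (rule inj_onI) (auto simp: ed_eq_iff)
  have disj: "ed a ` K \<inter> ed b ` K = {}" unfolding K_def using ab by (auto simp: ed_eq_iff ed_eq_iff2)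
  have fin: "finite K" unfolding K_def by simp
  show "Uf K a E + Uf K b E = S (ed a ` K \<union> ed b ` K) E"
  proof -
    have 1: "Uf K a E = S (ed a ` K) E" unfolding S_def Uf_def sum.reindex[OF inja] o_def
      by (intro sum.cong refl) (auto simp: K_def xv_ed)
    have 2: "Uf K b E = S (ed b ` K) E" unfolding S_def Uf_def sum.reindex[OF injb] o_def
      by (intro sum.cong refl) (auto simp: K_def xv_ed)
    have 3: "S (ed a ` K \<union> ed b ` K) E = S (ed a ` K) E + S (ed b ` K) E"
      unfolding S_def by (rule sum.union_disjoint) (use fin disj in auto)
    show ?thesis unfolding 1 2 3 ..
  qed
  show "ed a ` K \<union> ed b ` K \<subseteq> pot_edges n" unfolding K_def using ab by (auto intro: ed_pot)
  have cK: "card K = n - 2" unfolding K_def using ab by (simp add: card_Diff_subset)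
  show "card (ed a ` K \<union> ed b ` K) = 2 * (n - 2)"
    by (subst card_Un_disjoint) (use fin disj in \<open>auto simp: card_image[OF inja] card_image[OF injb] cK\<close>)
qed

lemma Qm_sym: "Qm n E a b = Qm n E b a"
  unfolding Qm_def by (intro sum.cong refl) (simp add: lpe_sym[of n E a] lpe_sym[of n E _ b] mult.commute)

lemma pair_vals:
  fixes p :: real
  assumes ab: "a \<noteq> b" "a < n" "b < n" and p: "0 \<le> p" "p \<le> 1"
  shows "Eg n p (\<lambda>E. Qm n E a b * lpe n E b a) = p * (2 + 2 * (real n - 2) * p - (real n - 2) * p^2)"
    "Eg n p (\<lambda>E. Qm n E a b * Qm n E b a) =
       (real n - 2) * p^2 + (real n - 2) * (real n - 3) * p^4
       + p * (4 + 4 * mo1 (2 * (real n - 2)) p + mo2 (2 * (real n - 2)) p - 4 * ((real n - 2) * p^2)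
              - 4 * ((real n - 2) * p^2 + (real n - 2) * (real n - 3) * p^3))"
proof -
  define K where "K = {..<n} - {a, b}"
  have Kba: "{..<n} - {b, a} = K" unfolding K_def by auto
  have cK: "real (card K) = real n - 2" unfolding K_def using ab by (simp add: card_Diff_subset of_nat_diff)
  define G where "G = ed a ` K \<union> ed b ` K"
  have WS: "Uf K a E + Uf K b E = S G E" for E unfolding K_def G_def by (rule W_S(1)[OF ab])
  have cG: "real (card G) = 2 * (real n - 2)"
    unfolding G_def K_def using W_S(3)[OF ab] ab by simp
  have GS: "G \<subseteq> pot_edges n" unfolding G_def K_def by (rule W_S(2)[OF ab])
  have mG: "Eg n p (S G) = mo1 (2 * (real n - 2)) p" "Eg n p (\<lambda>E. (S G E)^2) = mo2 (2 * (real n - 2)) p"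
    using mom_S[OF GS p] unfolding cG by auto
  have Ksa: "K \<subseteq> {..<n} - {a, b}" and Ksb: "K \<subseteq> {..<n} - {b, a}" unfolding K_def by auto
  note pa = pair_mom[OF ab p Ksa, unfolded cK] 
  note pb = pair_mom[OF ab(1)[symmetric] ab(3) ab(2) p Ksb, unfolded cK]
  have Cba: "Cf K b a E = Cf K a b E" for E by (rule Cf_sym)
  have pa': "Eg n p (Uf K a) = (real n - 2) * p" "Eg n p (Cf K a b) = (real n - 2) * p^2"
    "Eg n p (\<lambda>E. (Cf K a b E)^2) = (real n - 2) * p^2 + (real n - 2) * (real n - 2 - 1) * p^4"
    "Eg n p (\<lambda>E. Cf K a b E * Uf K a E) = (real n - 2) * p^2 + (real n - 2) * (real n - 2 - 1) * p^3"
    using pa by auto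
  have pb': "Eg n p (Uf K b) = (real n - 2) * p"
    "Eg n p (\<lambda>E. Cf K a b E * Uf K b E) = (real n - 2) * p^2 + (real n - 2) * (real n - 2 - 1) * p^3"
    using pb by (auto simp: Cba)
  have neK: "ed a b \<noteq> ed a c" "ed a b \<noteq> ed b c" if "c \<in> K" for c
    using that ab unfolding K_def by (auto simp: ed_eq_iff)
  have iUa: "Uf K a (E(ed a b := t)) = Uf K a E" for E t by (rule Uf_upd) (use neK in auto)
  have iUb: "Uf K b (E(ed a b := t)) = Uf K b E" for E t by (rule Uf_upd) (use neK in auto)
  have iC: "Cf K a b (E(ed a b := t)) = Cf K a b E" for E t by (rule Cf_upd) (use neK in auto)
  have iS: "S G (E(ed a b := t)) = S G E" for E t using WS[of "E(ed a b := t)"] WS[of E] iUa iUb by simp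
  have pk: "Eg n p (\<lambda>E. xv E a b * h (Uf K a E) (Uf K b E) (Cf K a b E) (S G E))
      = p * Eg n p (\<lambda>E. h (Uf K a E) (Uf K b E) (Cf K a b E) (S G E))" for h
    by (rule peel_xv[OF ab p]) (simp add: iUa iUb iC iS)
  have Qab: "Qm n E a b = Cf K a b E - xv E a b * (2 * xv E a b + S G E)" for E
  proof -
    have "dg n E b = xv E a b + Uf K b E"
      using dg_split[OF ab(1)[symmetric] ab(3) ab(2), of E] Kba by (simp add: xv_sym)
    then show ?thesis using Qm_off[OF ab, of E] dg_split[OF ab, of E] WS[of E, symmetric]
      unfolding K_def[symmetric] by (simp add: algebra_simps)
  qed
  have "Eg n p (\<lambda>E. Qm n E a b * lpe n E b a)
      = Eg n p (\<lambda>E. xv E a b * (2 + S G E - Cf K a b E))"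
  proof (rule Eg_cong)
    fix E
    show "Qm n E a b * lpe n E b a = xv E a b * (2 + S G E - Cf K a b E)"
      unfolding Qab using ab xv_01[of E a b] by (auto simp: lpe_def xv_sym[of E b a] algebra_simps)
  qed
  also have "\<dots> = p * (2 + Eg n p (S G) - Eg n p (Cf K a b))"
    using pk[of "\<lambda>u v c s. 2 + s - c"] by (simp add: Eg_add Eg_diff Eg_const)
  also have "\<dots> = p * (2 + 2 * (real n - 2) * p - (real n - 2) * p^2)"
    unfolding mG pa' by (simp add: mo1_def algebra_simps)
  finally show "Eg n p (\<lambda>E. Qm n E a b * lpe n E b a) = p * (2 + 2 * (real n - 2) * p - (real n - 2) * p^2)" .
  have "Eg n p (\<lambda>E. Qm n E a b * Qm n E b a)
      = Eg n p (\<lambda>E. (Cf K a b E)^2 + xv E a b * (4 + 4 * S G E + (S G E)^2 - 4 * Cf K a b E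
           - 2 * (Cf K a b E * Uf K a E) - 2 * (Cf K a b E * Uf K b E)))"
  proof (rule Eg_cong)
    fix E
    have "Qm n E a b * Qm n E b a = (Qm n E a b)^2" by (simp add: Qm_sym[of n E b a] power2_eq_square)
    then show "Qm n E a b * Qm n E b a = (Cf K a b E)^2 + xv E a b * (4 + 4 * S G E + (S G E)^2 - 4 * Cf K a b E
           - 2 * (Cf K a b E * Uf K a E) - 2 * (Cf K a b E * Uf K b E))"
      unfolding Qab using xv_01[of E a b] WS[of E, symmetric]
      by (auto simp: algebra_simps power2_eq_square)
  qed
  also have "\<dots> = Eg n p (\<lambda>E. (Cf K a b E)^2) + p * (4 + 4 * Eg n p (S G) + Eg n p (\<lambda>E. (S G E)^2)
      - 4 * Eg n p (Cf K a b) - 2 * Eg n p (\<lambda>E. Cf K a b E * Uf K a E) - 2 * Eg n p (\<lambda>E. Cf K a b E * Uf K b E))"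
    using pk[of "\<lambda>u v c s. 4 + 4 * s + s^2 - 4 * c - 2 * (c * u) - 2 * (c * v)"]
    by (simp add: Eg_add Eg_diff Eg_const Eg_cmult)
  also have "\<dots> = (real n - 2) * p^2 + (real n - 2) * (real n - 3) * p^4
       + p * (4 + 4 * mo1 (2 * (real n - 2)) p + mo2 (2 * (real n - 2)) p - 4 * ((real n - 2) * p^2)
              - 4 * ((real n - 2) * p^2 + (real n - 2) * (real n - 3) * p^3))"
    unfolding mG pa' pb' by (simp add: algebra_simps)
  finally show "Eg n p (\<lambda>E. Qm n E a b * Qm n E b a) =
       (real n - 2) * p^2 + (real n - 2) * (real n - 3) * p^4
       + p * (4 + 4 * mo1 (2 * (real n - 2)) p + mo2 (2 * (real n - 2)) p - 4 * ((real n - 2) * p^2)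
              - 4 * ((real n - 2) * p^2 + (real n - 2) * (real n - 3) * p^3))" .
qed

lemma lap_carrier: "laplacian n E \<in> carrier_mat n n"
  unfolding laplacian_def by simp

lemma lap_entry: "a < n \<Longrightarrow> b < n \<Longrightarrow> laplacian n E $$ (a,b) = lpe n E a b"
  unfolding laplacian_def lpe_def by (simp add: degree_dg xv_def)

lemma LL_entry: "a < n \<Longrightarrow> b < n \<Longrightarrow> (laplacian n E * laplacian n E) $$ (a,b) = Qm n E a b"
  unfolding Qm_def by (simp add: mult_entry[OF lap_carrier lap_carrier] lap_entry)

lemma tr_formulas:
  fixes n :: nat and E :: "nat \<times> nat \<Rightarrow> bool" defines "L \<equiv> laplacian n E"
  shows "tr (L ^\<^sub>m 1) = (\<Sum>a<n. dg n E a)"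
    "tr (L ^\<^sub>m 2) = (\<Sum>a<n. Qm n E a a)"
    "tr (L ^\<^sub>m 3) = (\<Sum>a<n. \<Sum>b<n. Qm n E a b * lpe n E b a)"
    "tr (L ^\<^sub>m 4) = (\<Sum>a<n. \<Sum>b<n. Qm n E a b * Qm n E b a)"
proof -
  have L: "L \<in> carrier_mat n n" unfolding L_def by (rule lap_carrier)
  have LL: "L * L \<in> carrier_mat n n" using L by simp
  have p1: "L ^\<^sub>m 1 = L" using L by simp
  have p2: "L ^\<^sub>m 2 = L * L" using L by (simp add: numeral_2_eq_2)
  have p3: "L ^\<^sub>m 3 = (L * L) * L" using L by (simp add: numeral_3_eq_3)
  have p4: "L ^\<^sub>m 4 = (L * L) * (L * L)"
  proof -
    have "L ^\<^sub>m 4 = ((L * L) * L) * L" using L by (simp add: eval_nat_numeral)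
    also have "\<dots> = (L * L) * (L * L)" by (rule assoc_mult_mat[OF LL L L])
    finally show ?thesis .
  qed
  show "tr (L ^\<^sub>m 1) = (\<Sum>a<n. dg n E a)"
    unfolding p1 tr_def using L by (intro sum.cong) (auto simp: L_def lap_entry lpe_def)
  show "tr (L ^\<^sub>m 2) = (\<Sum>a<n. Qm n E a a)"
    unfolding p2 tr_def using L by (intro sum.cong) (auto simp: L_def LL_entry simp del: index_mult_mat(1))
  show "tr (L ^\<^sub>m 3) = (\<Sum>a<n. \<Sum>b<n. Qm n E a b * lpe n E b a)"
  proof -
    have e: "((L * L) * L) $$ (a,a) = (\<Sum>b<n. Qm n E a b * lpe n E b a)" if "a < n" for a
      by (subst mult_entry[OF LL L], (use that in simp)+) (simp add: L_def LL_entry lap_entry that del: index_mult_mat(1))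
    have dr: "dim_row ((L * L) * L) = n" using L by simp
    show ?thesis unfolding p3 tr_def dr by (rule sum.cong[OF refl]) (rule e, simp)
  qed
  show "tr (L ^\<^sub>m 4) = (\<Sum>a<n. \<Sum>b<n. Qm n E a b * Qm n E b a)"
  proof -
    have e: "((L * L) * (L * L)) $$ (a,a) = (\<Sum>b<n. Qm n E a b * Qm n E b a)" if "a < n" for a
      by (subst mult_entry[OF LL LL], (use that in simp)+) (simp add: L_def LL_entry that del: index_mult_mat(1))
    have dr: "dim_row ((L * L) * (L * L)) = n" using L by simp
    show ?thesis unfolding p4 tr_def dr by (rule sum.cong[OF refl]) (rule e, simp)
  qed
qed

lemma sum_off:
  fixes f :: "nat \<Rightarrow> nat \<Rightarrow> real"
  assumes "a < n"
  shows "(\<Sum>b<n. f a b) = f a a + (\<Sum>b\<in>{..<n} - {a}. f a b)"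
  using assms by (subst sum.remove[of _ a]) auto

lemma Eg_traces:
  fixes p :: real
  assumes n: "2 \<le> n" and p: "0 \<le> p" "p \<le> 1"
  defines "N \<equiv> real n - 1" and "m \<equiv> real n - 2"
  shows "Eg n p (\<lambda>E. tr (laplacian n E ^\<^sub>m 1)) = real n * mo1 N p"
    "Eg n p (\<lambda>E. tr (laplacian n E ^\<^sub>m 2)) = real n * (mo2 N p + mo1 N p)"
    "Eg n p (\<lambda>E. tr (laplacian n E ^\<^sub>m 3)) = real n * ((mo3 N p + mo2 N p) + N * (p * (2 + 2 * m * p - m * p^2)))"
    "Eg n p (\<lambda>E. tr (laplacian n E ^\<^sub>m 4)) = real n * ((mo4 N p + 2 * mo3 N p + mo2 N p) + N *
       (m * p^2 + m * (real n - 3) * p^4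
       + p * (4 + 4 * mo1 (2 * m) p + mo2 (2 * m) p - 4 * (m * p^2)
              - 4 * (m * p^2 + m * (real n - 3) * p^3))))"
proof -
  note vm = vertex_mom[where n=n, OF _ p, folded N_def]
  have cardoff: "card ({..<n} - {a}) = n - 1" if "a < n" for a using that by simp
  have rN: "real (n - 1) = N" unfolding N_def using n by (simp add: of_nat_diff)
  show "Eg n p (\<lambda>E. tr (laplacian n E ^\<^sub>m 1)) = real n * mo1 N p"
    unfolding tr_formulas Eg_sum using vm by simp
  show "Eg n p (\<lambda>E. tr (laplacian n E ^\<^sub>m 2)) = real n * (mo2 N p + mo1 N p)"
    unfolding tr_formulas Eg_sum
  proof -
    have "Eg n p (\<lambda>E. Qm n E a a) = mo2 N p + mo1 N p" if "a < n" for a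
    proof -
      have "Eg n p (\<lambda>E. Qm n E a a) = Eg n p (\<lambda>E. (dg n E a)^2 + dg n E a)"
        by (rule Eg_cong) (simp add: Qm_diag[OF that])
      then show ?thesis using vm[OF that] by (simp add: Eg_add)
    qed
    then show "(\<Sum>a<n. Eg n p (\<lambda>E. Qm n E a a)) = real n * (mo2 N p + mo1 N p)" by simp
  qed
  show "Eg n p (\<lambda>E. tr (laplacian n E ^\<^sub>m 3)) = real n * ((mo3 N p + mo2 N p) + N * (p * (2 + 2 * m * p - m * p^2)))"
    unfolding tr_formulas Eg_sum
  proof -
    have "(\<Sum>b<n. Eg n p (\<lambda>E. Qm n E a b * lpe n E b a)) = (mo3 N p + mo2 N p) + N * (p * (2 + 2 * m * p - m * p^2))"
      if a: "a < n" for a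
    proof -
      have d: "Eg n p (\<lambda>E. Qm n E a a * lpe n E a a) = mo3 N p + mo2 N p"
      proof -
        have "Eg n p (\<lambda>E. Qm n E a a * lpe n E a a) = Eg n p (\<lambda>E. (dg n E a)^3 + (dg n E a)^2)"
          by (rule Eg_cong) (simp add: Qm_diag[OF a] lpe_def algebra_simps power2_eq_square power3_eq_cube)
        then show ?thesis using vm[OF a] by (simp add: Eg_add)
      qed
      have o: "Eg n p (\<lambda>E. Qm n E a b * lpe n E b a) = p * (2 + 2 * m * p - m * p^2)" if "b \<in> {..<n} - {a}" for b
        using pair_vals(1)[of a b n p] that a p unfolding m_def by auto
      show ?thesis using sum_off[OF a, of "\<lambda>a b. Eg n p (\<lambda>E. Qm n E a b * lpe n E b a)"] d o cardoff[OF a] rN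
        by simp
    qed
    then show "(\<Sum>a<n. \<Sum>b<n. Eg n p (\<lambda>E. Qm n E a b * lpe n E b a)) = real n * ((mo3 N p + mo2 N p) + N * (p * (2 + 2 * m * p - m * p^2)))"
      by simp
  qed
  show "Eg n p (\<lambda>E. tr (laplacian n E ^\<^sub>m 4)) = real n * ((mo4 N p + 2 * mo3 N p + mo2 N p) + N *
       (m * p^2 + m * (real n - 3) * p^4
       + p * (4 + 4 * mo1 (2 * m) p + mo2 (2 * m) p - 4 * (m * p^2)
              - 4 * (m * p^2 + m * (real n - 3) * p^3))))"
    unfolding tr_formulas Eg_sum
  proof -
    let ?P4 = "m * p^2 + m * (real n - 3) * p^4
       + p * (4 + 4 * mo1 (2 * m) p + mo2 (2 * m) p - 4 * (m * p^2)
              - 4 * (m * p^2 + m * (real n - 3) * p^3))"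
    have "(\<Sum>b<n. Eg n p (\<lambda>E. Qm n E a b * Qm n E b a)) = (mo4 N p + 2 * mo3 N p + mo2 N p) + N * ?P4"
      if a: "a < n" for a
    proof -
      have d: "Eg n p (\<lambda>E. Qm n E a a * Qm n E a a) = mo4 N p + 2 * mo3 N p + mo2 N p"
      proof -
        have "Eg n p (\<lambda>E. Qm n E a a * Qm n E a a) = Eg n p (\<lambda>E. (dg n E a)^4 + 2 * (dg n E a)^3 + (dg n E a)^2)"
          by (rule Eg_cong) (simp add: Qm_diag[OF a] algebra_simps eval_nat_numeral)
        then show ?thesis using vm[OF a] by (simp add: Eg_add Eg_cmult)
      qed
      have o: "Eg n p (\<lambda>E. Qm n E a b * Qm n E b a) = ?P4" if "b \<in> {..<n} - {a}" for b
        using pair_vals(2)[of a b n p] that a p unfolding m_def by auto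
      show ?thesis using sum_off[OF a, of "\<lambda>a b. Eg n p (\<lambda>E. Qm n E a b * Qm n E b a)"] d o cardoff[OF a] rN
        by simp
    qed
    then show "(\<Sum>a<n. \<Sum>b<n. Eg n p (\<lambda>E. Qm n E a b * Qm n E b a)) = real n * ((mo4 N p + 2 * mo3 N p + mo2 N p) + N * ?P4)"
      by simp
  qed
qed

lemma proots_lin: "proots (\<Prod>e\<leftarrow>es. [:-e, 1:]) = mset (es :: real list)"
proof (induction es)
  case Nil then show ?case by simp
next
  case (Cons x xs)
  have nz: "(\<Prod>e\<leftarrow>xs. [:-e, 1:]) \<noteq> 0" by (auto simp: prod_list_zero_iff)
  have "(\<Prod>e\<leftarrow>x # xs. [:-e, 1:]) = [:-x, 1:] * (\<Prod>e\<leftarrow>xs. [:-e, 1:])" by simp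
  also have "proots \<dots> = proots [:-x, 1:] + proots (\<Prod>e\<leftarrow>xs. [:-e, 1:])"
    by (rule proots_mult) (use nz in auto)
  also have "proots [:-x, 1:] = {#x#}" using proots_linear_factor[of "-x"] by simp
  finally show ?case using Cons by simp
qed

lemma lap_sym: "a < n \<Longrightarrow> b < n \<Longrightarrow> laplacian n E $$ (a,b) = laplacian n E $$ (b,a)"
  by (simp add: lap_entry lpe_sym)

lemma lap_ev0:
  assumes n: "0 < n"
  shows "eigenvalue (laplacian n E) 0"
proof -
  let ?L = "laplacian n E"
  define v :: "real vec" where "v = vec n (\<lambda>_. 1)"
  have vc: "v \<in> carrier_vec n" unfolding v_def by simp
  have v0: "v \<noteq> 0\<^sub>v n"
  proof
    assume "v = 0\<^sub>v n"
    then have "v $ 0 = 0\<^sub>v n $ 0" by simp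
    then show False using n unfolding v_def by simp
  qed
  have Lv: "?L *\<^sub>v v = 0 \<cdot>\<^sub>v v"
  proof (rule eq_vecI)
    fix a assume "a < dim_vec (0 \<cdot>\<^sub>v v)"
    then have a: "a < n" using vc by simp
    have "(?L *\<^sub>v v) $ a = (\<Sum>b<n. lpe n E a b)"
      using a lap_carrier[of n E] vc
      by (simp add: scalar_prod_def lessThan_atLeast0 lap_entry v_def)
    also have "\<dots> = dg n E a - (\<Sum>b<n. xv E a b)"
      unfolding lpe_def sum_subtractf using a by (simp add: sum.delta)
    also have "\<dots> = 0" unfolding dg_def by simp
    finally show "(?L *\<^sub>v v) $ a = (0 \<cdot>\<^sub>v v) $ a" using a vc by simp
  next
    show "dim_vec (?L *\<^sub>v v) = dim_vec (0 \<cdot>\<^sub>v v)" using vc lap_carrier[of n E] by simp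
  qed
  have "eigenvector ?L v 0" unfolding eigenvector_def using vc v0 Lv lap_carrier[of n E] by simp
  then show ?thesis unfolding eigenvalue_def by blast
qed

lemma spec_facts:
  assumes n: "0 < n" and k: "1 \<le> k"
  shows "size (lap_spectrum n E - {#0#}) = n - 1"
    "(\<Sum>x\<in>#lap_spectrum n E - {#0#}. x ^ k) = tr (laplacian n E ^\<^sub>m k)"
proof -
  let ?L = "laplacian n E"
  obtain es where cp: "char_poly ?L = (\<Prod>e\<leftarrow>es. [:-e,1:])" and len: "length es = n"
    and trk: "\<forall>k. (\<Sum>e\<leftarrow>es. e^k) = tr (?L ^\<^sub>m k)"
    using sym_spec[OF lap_carrier lap_sym] by blast
  have spec: "lap_spectrum n E = mset es" unfolding lap_spectrum_def cp by (rule proots_lin)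
  have "poly (char_poly ?L) 0 = 0"
    using lap_ev0[OF n] eigenvalue_root_char_poly[OF lap_carrier] by blast
  then have "0 \<in> set es" unfolding cp by (auto simp: poly_prod_list prod_list_zero_iff)
  then have z: "0 \<in># lap_spectrum n E" unfolding spec by simp
  show "size (lap_spectrum n E - {#0#}) = n - 1"
    using z by (simp add: size_Diff_singleton spec len)
  have "(\<Sum>x\<in>#lap_spectrum n E. x ^ k) = 0 ^ k + (\<Sum>x\<in>#lap_spectrum n E - {#0#}. x ^ k)"
    by (subst insert_DiffM[OF z, symmetric]) simp
  also have "0 ^ k = (0::real)" using k by simp
  finally have "(\<Sum>x\<in>#lap_spectrum n E - {#0#}. x ^ k) = (\<Sum>x\<in>#mset es. x ^ k)" unfolding spec by simp
  also have "\<dots> = (\<Sum>e\<leftarrow>es. e^k)" by (metis mset_map sum_mset_sum_list)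
  also have "\<dots> = tr (?L ^\<^sub>m k)" using trk by simp
  finally show "(\<Sum>x\<in>#lap_spectrum n E - {#0#}. x ^ k) = tr (laplacian n E ^\<^sub>m k)" .
qed

lemma moment_eq:
  assumes i: "2 \<le> i" "i \<le> n" and k: "1 \<le> k"
  shows "moment n p i k = Eg n p (\<lambda>E. tr (laplacian n E ^\<^sub>m k)) / (real n - 1)"
proof -
  let ?A = "set_pmf (gnp n p)"
  have finA: "finite ?A" unfolding gnp_def by (rule finite_set_Pi_pmf[OF finite_pot_edges])
  have n: "0 < n" using i by simp
  have inner: "measure_pmf.expectation (pmf_of_set (permutations_of_multiset (lap_spectrum n E - {#0#})))
      (\<lambda>xs. (xs ! (i - 2)) ^ k) = tr (laplacian n E ^\<^sub>m k) / (real n - 1)" for E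
  proof -
    have j: "i - 2 < size (lap_spectrum n E - {#0#})" using spec_facts(1)[OF n k, of E] i by simp
    show ?thesis using perm_expectation[OF j, of "\<lambda>x. x ^ k"] spec_facts[OF n k, of E] n
      by (simp add: of_nat_diff)
  qed
  have "moment n p i k = (\<Sum>E\<in>?A. pmf (gnp n p) E *\<^sub>R
      measure_pmf.expectation (pmf_of_set (permutations_of_multiset (lap_spectrum n E - {#0#}))) (\<lambda>xs. (xs ! (i - 2)) ^ k))"
    unfolding moment_def lap_eigs_labelled_def
    by (rule pmf_expectation_bind[OF finA]) auto
  also have "\<dots> = (\<Sum>E\<in>?A. pmf (gnp n p) E *\<^sub>R (tr (laplacian n E ^\<^sub>m k) / (real n - 1)))"
    by (simp add: inner)
  also have "\<dots> = Eg n p (\<lambda>E. tr (laplacian n E ^\<^sub>m k) / (real n - 1))"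
    unfolding Eg_def by (rule integral_measure_pmf[OF finA, symmetric]) auto
  also have "\<dots> = Eg n p (\<lambda>E. tr (laplacian n E ^\<^sub>m k)) / (real n - 1)"
    using Eg_cmult[of n p "1 / (real n - 1)" "\<lambda>E. tr (laplacian n E ^\<^sub>m k)"] by simp
  finally show ?thesis .
qed

theorem theorem1:
  fixes n i :: nat and p :: real
  assumes "0 < p" "p < 1" "2 \<le> i" "i \<le> n"
  shows "(moment n p i 1 = real n * p) \<and>
          (moment n p i 2 = real n * (real n - 2) * p ^ 2 + 2 * real n * p) \<and>
          (moment n p i 3 = real n * (real n - 2) * (real n - 4) * p ^ 3
                          + 6 * real n * (real n - 2) * p ^ 2 + 4 * real n * p) \<and>
          (moment n p i 4 = real n * (real n - 7) * (real n - 3) * (real n - 2) * p ^ 4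
                          + 6 * real n * (2 * real n - 7) * (real n - 2) * p ^ 3
                          + 25 * real n * (real n - 2) * p ^ 2 + 8 * real n * p)"
proof -
  have n: "2 \<le> n" using assms by simp
  have p: "0 \<le> p" "p \<le> 1" using assms by auto
  have nz: "real n - 1 \<noteq> 0" using n by simp
  note T = Eg_traces[OF n p]
  have M1: "moment n p i 1 = Eg n p (\<lambda>E. tr (laplacian n E ^\<^sub>m 1)) / (real n - 1)"
    by (rule moment_eq[OF assms(3,4)]) simp
  have M2: "moment n p i 2 = Eg n p (\<lambda>E. tr (laplacian n E ^\<^sub>m 2)) / (real n - 1)"
    by (rule moment_eq[OF assms(3,4)]) simp
  have M3: "moment n p i 3 = Eg n p (\<lambda>E. tr (laplacian n E ^\<^sub>m 3)) / (real n - 1)"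
    by (rule moment_eq[OF assms(3,4)]) simp
  have M4: "moment n p i 4 = Eg n p (\<lambda>E. tr (laplacian n E ^\<^sub>m 4)) / (real n - 1)"
    by (rule moment_eq[OF assms(3,4)]) simp
  have m1: "moment n p i 1 = real n * p"
    unfolding M1 T using nz by (simp add: mo1_def field_simps)
  have m2: "moment n p i 2 = real n * (real n - 2) * p ^ 2 + 2 * real n * p"
    unfolding M2 T using nz
    by (simp add: mo1_def mo2_def field_simps; simp add: algebra_simps eval_nat_numeral)
  have m3: "moment n p i 3 = real n * (real n - 2) * (real n - 4) * p ^ 3
                          + 6 * real n * (real n - 2) * p ^ 2 + 4 * real n * p"
    unfolding M3 T using nz
    by (simp add: mo1_def mo2_def mo3_def field_simps; simp add: algebra_simps eval_nat_numeral)
  have m4: "moment n p i 4 = real n * (real n - 7) * (real n - 3) * (real n - 2) * p ^ 4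
                          + 6 * real n * (2 * real n - 7) * (real n - 2) * p ^ 3
                          + 25 * real n * (real n - 2) * p ^ 2 + 8 * real n * p"
    unfolding M4 T using nz
    by (simp add: mo1_def mo2_def mo3_def mo4_def field_simps; simp add: algebra_simps eval_nat_numeral)
  show ?thesis using m1 m2 m3 m4 by blast
qed

end
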